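(* Let $\lambda \geq 0$, $0 \leq \gamma \leq 1$, $0\leq\beta<1$, $\tau \in \mathbb{C}\setminus\{0\}$ and $\delta \in \mathbb{N}_0$. Let $f(z)=z+\sum_{k=2}^{\infty}a_kz^k$ belong to $\Theta_{\Sigma}(\tau,\lambda,\gamma,\delta;\beta)$. Then $$|a_2| \leq \min\left\{\frac{2|\tau|(1-\beta)}{(\delta+1)(1+\lambda+\gamma+5\lambda\gamma)},\ 2\sqrt{\frac{|\tau|(1-\beta)}{(\delta+1)(\delta+2)\big(1+2(\lambda+\gamma+5\lambda\gamma)\big)}}\right\}$$ and $$|a_3| \leq \frac{4|\tau|(1-\beta)}{(\delta+1)(\delta+2)\big(1+2(\lambda+\gamma+5\lambda\gamma)\big)}.$$
   Context: Let $\mathbb{U}=\{z\in\mathbb{C}:|z|<1\}$. $\Sigma$ denotes the class of bi-univalent functions: functions $f(z)=z+\sum_{k=2}^\infty a_kz^k$ analytic and univalent in $\mathbb{U}$ whose inverse $f^{-1}$ extends to a univalent function $g$ on $\mathbb{U}$; this $g$ has the expansion $g(w)=w-a_2w^2+(2a_2^2-a_3)w^3-\cdots$. For $\delta\in\mathbb{N}_0$ and $h(z)=z+\sum_{k\ge2}c_kz^k$ analytic in $\mathbb{U}$, the Ruscheweyh derivative is $\mathcal{R}^\delta h(z)=z+\sum_{k=2}^{\infty}\frac{\Gamma(\delta+k)}{\Gamma(k)\Gamma(\delta+1)}c_kz^k$. For such $h$ and parameters $\lambda,\gamma,\tau\neq0,\delta$, put $$J_h(z)=1+\frac{1}{\tau}\Big[(1-\lambda)(1-\gamma)\frac{\mathcal{R}^\delta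 h(z)}{z}+(\lambda(\gamma+1)+\gamma)(\mathcal{R}^\delta h)'(z)+\lambda\gamma\big(z(\mathcal{R}^\delta h)''(z)-2\big)-1\Big].$$ For $0\le\beta<1$, $\Theta_{\Sigma}(\tau,\lambda,\gamma,\delta;\beta)$ is the set of $f\in\Sigma$ such that $\operatorname{Re}J_f(z)>\beta$ for all $z\in\mathbb{U}$ and $\operatorname{Re}J_g(w)>\beta$ for all $w\in\mathbb{U}$, where $g$ is the extension of $f^{-1}$ to $\mathbb{U}$. *)

theory Defs
  imports "HOL-Analysis.Analysis"
begin

definition tcoeff :: "(complex \<Rightarrow> complex) \<Rightarrow> nat \<Rightarrow> complex" where
  "tcoeff h k = (deriv ^^ k) h 0 / of_nat (fact k)"

text \<open>Ruscheweyh coefficient Gamma(delta+k)/(Gamma(k) Gamma(delta+1)) = C(delta+k-1, delta) for k >= 1.\<close>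
definition rcoef :: "nat \<Rightarrow> nat \<Rightarrow> complex" where
  "rcoef \<delta> k = (if k = 0 then 0 else of_nat ((\<delta> + k - 1) choose \<delta>))"

definition rusch :: "nat \<Rightarrow> (complex \<Rightarrow> complex) \<Rightarrow> complex \<Rightarrow> complex" where
  "rusch \<delta> h z = (\<Sum>k. rcoef \<delta> k * tcoeff h k * z ^ k)"

text \<open>R^delta h (z) / z, as the (removable-singularity) power series sum_k rcoef(k+1) c_{k+1} z^k,
  so that it is also defined at z = 0 (value 1).\<close>
definition rusch_quot :: "nat \<Rightarrow> (complex \<Rightarrow> complex) \<Rightarrow> complex \<Rightarrow> complex" where
  "rusch_quot \<delta> h z = (\<Sum>k. rcoef \<delta> (Suc k) * tcoeff h (Suc k) * z ^ k)"

definition Jfun :: "complex \<Rightarrow> real \<Rightarrow> real \<Rightarrow> nat \<Rightarrow> (complex \<Rightarrow> complex) \<Rightarrow> complex \<Rightarrow> complex" where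
  "Jfun \<tau> lam \<gamma> \<delta> h z = 1 + (1 / \<tau>) *
     (of_real ((1 - lam) * (1 - \<gamma>)) * rusch_quot \<delta> h z
      + of_real (lam * (\<gamma> + 1) + \<gamma>) * deriv (rusch \<delta> h) z
      + of_real (lam * \<gamma>) * (z * deriv (deriv (rusch \<delta> h)) z - 2)
      - 1)"

text \<open>Bi-univalent class Sigma: f analytic, univalent, normalised on the unit disc, and f^{-1}
  (defined near 0) has a univalent analytic extension g to the unit disc.\<close>
definition bi_univalent_ext :: "(complex \<Rightarrow> complex) \<Rightarrow> (complex \<Rightarrow> complex) \<Rightarrow> bool" where
  "bi_univalent_ext f g \<longleftrightarrow>
     f holomorphic_on ball 0 1 \<and> inj_on f (ball 0 1) \<and> f 0 = 0 \<and> deriv f 0 = 1 \<and>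
     g holomorphic_on ball 0 1 \<and> inj_on g (ball 0 1) \<and>
     (\<exists>r>0. \<forall>w\<in>ball 0 r. g w \<in> ball 0 1 \<and> f (g w) = w)"

definition Theta_Sigma :: "complex \<Rightarrow> real \<Rightarrow> real \<Rightarrow> nat \<Rightarrow> real \<Rightarrow> (complex \<Rightarrow> complex) set" where
  "Theta_Sigma \<tau> lam \<gamma> \<delta> \<beta> = {f. \<exists>g. bi_univalent_ext f g \<and>
      (\<forall>z\<in>ball 0 1. Re (Jfun \<tau> lam \<gamma> \<delta> f z) > \<beta>) \<and>
      (\<forall>w\<in>ball 0 1. Re (Jfun \<tau> lam \<gamma> \<delta> g w) > \<beta>)}"

end

theory Submission
  imports Defs "HOL-Complex_Analysis.Complex_Analysis"
begin

lemma fps_deriv_pow_nth: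
  fixes H :: "complex fps"
  shows "((fps_deriv ^^ j) H) $ m = of_nat (fact (m+j)) / of_nat (fact m) * H $ (m+j)"
proof (induction j arbitrary: m)
  case 0 then show ?case by simp
next
  case (Suc j)
  have "((fps_deriv ^^ Suc j) H) $ m = of_nat (m+1) * ((fps_deriv ^^ j) H) $ (m+1)"
    by (simp add: fps_deriv_def)
  also have "\<dots> = of_nat (m+1) * (of_nat (fact (m+1+j)) / of_nat (fact (m+1)) * H $ (m+1+j))"
    using Suc.IH[of "m+1"] by (simp only:)
  also have "\<dots> = of_nat (fact (m + Suc j)) / of_nat (fact m) * H $ (m + Suc j)"
  proof -
    have e1: "m+1+j = m + Suc j" by simp
    have e2: "(of_nat (fact (m+1)) :: complex) = of_nat (m+1) * of_nat (fact m)" unfolding of_nat_mult[symmetric] by (simp only: Suc_eq_plus1[symmetric] fact_Suc of_nat_id)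
    have nz: "(of_nat (m+1) :: complex) \<noteq> 0" by (simp only: of_nat_eq_0_iff)
    have gen: "\<And>a b c x::complex. c \<noteq> 0 \<Longrightarrow> c * (a / (c * b) * x) = a / b * x"
      by (case_tac "b=0") (simp_all add: field_simps)
    show ?thesis unfolding e1 e2 by (rule gen[OF nz])
  qed
  finally show ?case .
qed

lemma radius_deriv_pow:
  fixes H :: "complex fps"
  shows "fps_conv_radius ((fps_deriv ^^ j) H) \<ge> fps_conv_radius H"
proof (induction j)
  case 0 then show ?case by simp
next
  case (Suc j) then show ?case using fps_conv_radius_deriv[of "(fps_deriv ^^ j) H"] by (simp add: order_trans)
qed

lemma tcoeff_fps: "tcoeff h k = fps_expansion h 0 $ k"
  by (simp add: tcoeff_def fps_expansion_def)

definition QT :: "nat \<Rightarrow> (complex \<Rightarrow> complex) \<Rightarrow> complex fps" where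
  "QT \<delta> h = Abs_fps (\<lambda>k. rcoef \<delta> (Suc k) * tcoeff h (Suc k))"
definition RT :: "nat \<Rightarrow> (complex \<Rightarrow> complex) \<Rightarrow> complex fps" where
  "RT \<delta> h = Abs_fps (\<lambda>k. rcoef \<delta> k * tcoeff h k)"

lemma rusch_eval: "rusch \<delta> h = eval_fps (RT \<delta> h)"
  by (simp add: fun_eq_iff rusch_def eval_fps_def RT_def)

lemma rusch_quot_eval: "rusch_quot \<delta> h = eval_fps (QT \<delta> h)"
  by (simp add: fun_eq_iff rusch_quot_def eval_fps_def QT_def)

lemma QT_eq: "QT \<delta> h = fps_const (1 / of_nat (fact \<delta>)) *
   (fps_deriv ^^ \<delta>) (fps_X ^ \<delta> * fps_shift 1 (fps_expansion h 0))"
proof (rule fps_ext)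
  fix m
  have b: "(of_nat ((\<delta> + m) choose \<delta>) :: complex) = fact (\<delta>+m) / (fact \<delta> * fact m)"
    by (subst binomial_fact) auto
  show "QT \<delta> h $ m = (fps_const (1 / of_nat (fact \<delta>)) *
   (fps_deriv ^^ \<delta>) (fps_X ^ \<delta> * fps_shift 1 (fps_expansion h 0))) $ m"
    unfolding fps_mult_left_const_nth fps_deriv_pow_nth
    by (simp add: QT_def rcoef_def fps_X_power_mult_nth tcoeff_fps b add.commute)
qed

lemma RT_eq: "RT \<delta> h = fps_X * QT \<delta> h"
  by (rule fps_ext) (auto simp: RT_def QT_def rcoef_def gr0_conv_Suc)

lemma radius_QT:
  assumes "h holomorphic_on ball 0 1"
  shows "fps_conv_radius (QT \<delta> h) \<ge> 1" "fps_conv_radius (RT \<delta> h) \<ge> 1"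
proof -
  have "h holomorphic_on eball 0 (ereal 1)" using assms by simp
  then have F: "fps_conv_radius (fps_expansion h 0) \<ge> 1"
    using conv_radius_fps_expansion by (simp add: one_ereal_def)
  have "fps_conv_radius (fps_X ^ \<delta> * fps_shift 1 (fps_expansion h 0)) \<ge> 1"
    using fps_conv_radius_mult[of "fps_X ^ \<delta>" "fps_shift 1 (fps_expansion h 0)"] F by simp
  then have "fps_conv_radius ((fps_deriv ^^ \<delta>) (fps_X ^ \<delta> * fps_shift 1 (fps_expansion h 0))) \<ge> 1"
    using radius_deriv_pow order_trans by blast
  then show Q: "fps_conv_radius (QT \<delta> h) \<ge> 1"
    unfolding QT_eq by (subst fps_conv_radius_cmult_left) auto
  show "fps_conv_radius (RT \<delta> h) \<ge> 1"
    unfolding RT_eq using fps_conv_radius_mult[of "fps_X" "QT \<delta> h"] Q by simp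
qed

lemma rcoef1: "rcoef \<delta> 1 = 1" by (simp add: rcoef_def)
lemma rcoef2: "rcoef \<delta> 2 = of_nat \<delta> + 1"
proof -
  have "\<delta> + 2 - 1 = Suc \<delta>" by simp
  then show ?thesis by (simp add: rcoef_def)
qed
lemma rcoef3: "rcoef \<delta> 3 = (of_nat \<delta> + 1) * (of_nat \<delta> + 2) / 2"
proof -
  have e: "\<delta> + 3 - 1 = \<delta> + 2" by simp
  have c: "(of_nat ((\<delta> + 2) choose \<delta>) :: complex) = fact (\<delta>+2) / (fact \<delta> * fact 2)"
    by (subst binomial_fact) auto
  have f: "(fact (\<delta>+2) :: complex) = (of_nat \<delta> + 2) * (of_nat \<delta> + 1) * fact \<delta>"
    by (simp add: fact_Suc numeral_2_eq_2 algebra_simps)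
  have nz: "(fact \<delta> :: complex) \<noteq> 0" by simp
  have c2: "(of_nat ((\<delta> + 2) choose \<delta>) :: complex) = (of_nat \<delta> + 1) * (of_nat \<delta> + 2) / 2"
    unfolding c f using nz by (simp add: field_simps fact_2)
  have "rcoef \<delta> 3 = of_nat ((\<delta> + 2) choose \<delta>)" by (simp add: rcoef_def e)
  also note c2
  finally show ?thesis .
qed

definition JF :: "complex \<Rightarrow> real \<Rightarrow> real \<Rightarrow> nat \<Rightarrow> (complex \<Rightarrow> complex) \<Rightarrow> complex fps" where
  "JF \<tau> lam \<gamma> \<delta> h = fps_const 1 + fps_const (1 / \<tau>) *
     (fps_const (of_real ((1 - lam) * (1 - \<gamma>))) * QT \<delta> h
      + fps_const (of_real (lam * (\<gamma> + 1) + \<gamma>)) * fps_deriv (RT \<delta> h)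
      + fps_const (of_real (lam * \<gamma>)) * (fps_X * fps_deriv (fps_deriv (RT \<delta> h)) - fps_const 2)
      - fps_const 1)"

lemma J_expansion:
  assumes "h holomorphic_on ball 0 1"
  shows "Jfun \<tau> lam \<gamma> \<delta> h has_fps_expansion JF \<tau> lam \<gamma> \<delta> h"
proof -
  have r0: "fps_conv_radius (RT \<delta> h) > 0"
    using radius_QT(1,2)[OF assms, of \<delta>] order.strict_trans2[of "0::ereal" 1] by simp
  have r2: "fps_conv_radius (QT \<delta> h) > 0"
    using radius_QT(1,2)[OF assms, of \<delta>] order.strict_trans2[of "0::ereal" 1] by simp
  note r1 = r0 r2
  have e1: "eval_fps (RT \<delta> h) has_fps_expansion RT \<delta> h"
    using r0 by (rule eval_fps_has_fps_expansion)
  have e2: "eval_fps (QT \<delta> h) has_fps_expansion QT \<delta> h"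
    using r2 by (rule eval_fps_has_fps_expansion)
  show ?thesis
    unfolding Jfun_def JF_def rusch_eval rusch_quot_eval
    by (intro has_fps_expansion_add has_fps_expansion_diff has_fps_expansion_cmult_left
          has_fps_expansion_mult has_fps_expansion_const has_fps_expansion_deriv e1 e2
          has_fps_expansion_fps_X)
qed

lemma tcoeff1: "tcoeff h 1 = deriv h 0" by (simp add: tcoeff_def)

lemma JF_nth:
  "JF \<tau> lam \<gamma> \<delta> h $ n = (if n = 0 then 1 else 0) + (1/\<tau>) *
     (rcoef \<delta> (Suc n) * tcoeff h (Suc n) *
        (of_real ((1 - lam) * (1 - \<gamma>)) + of_real (lam * (\<gamma> + 1) + \<gamma>) * of_nat (Suc n)
         + of_real (lam * \<gamma>) * of_nat n * of_nat (Suc n))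
      - (if n = 0 then 2 * of_real (lam * \<gamma>) + 1 else 0))"
proof (cases n)
  case 0
  then show ?thesis by (simp add: JF_def QT_def RT_def algebra_simps)
next
  case (Suc m)
  then show ?thesis by (simp add: JF_def QT_def RT_def algebra_simps)
qed

lemma J_coeffs:
  assumes d1: "deriv h 0 = 1"
  shows "JF \<tau> lam \<gamma> \<delta> h $ 0 = 1"
    "JF \<tau> lam \<gamma> \<delta> h $ 1 = (1/\<tau>) * of_real (1 + lam + \<gamma> + 5*lam*\<gamma>) * (of_nat \<delta> + 1) * tcoeff h 2"
    "JF \<tau> lam \<gamma> \<delta> h $ 2 = (1/\<tau>) * of_real (1 + 2*(lam + \<gamma> + 5*lam*\<gamma>)) *
         ((of_nat \<delta> + 1) * (of_nat \<delta> + 2) / 2) * tcoeff h 3"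
proof -
  have t1: "tcoeff h 1 = 1" using d1 tcoeff1[of h] by simp
  have e0: "of_real ((1 - lam) * (1 - \<gamma>)) + of_real (lam * (\<gamma> + 1) + \<gamma>) * 1
         + of_real (lam * \<gamma>) * 0 * 1 - (2 * of_real (lam * \<gamma>) + 1) = (0::complex)"
    by (simp add: algebra_simps)
  have "JF \<tau> lam \<gamma> \<delta> h $ 0 = 1 + (1/\<tau>) * (rcoef \<delta> 1 * tcoeff h 1 *
        (of_real ((1 - lam) * (1 - \<gamma>)) + of_real (lam * (\<gamma> + 1) + \<gamma>) * 1
         + of_real (lam * \<gamma>) * 0 * 1) - (2 * of_real (lam * \<gamma>) + 1))"
    using JF_nth[of \<tau> lam \<gamma> \<delta> h 0] by simp
  also have "\<dots> = 1" unfolding rcoef1 t1 using e0 by (simp add: algebra_simps)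
  finally show "JF \<tau> lam \<gamma> \<delta> h $ 0 = 1" .
  have e1: "of_real ((1 - lam) * (1 - \<gamma>)) + of_real (lam * (\<gamma> + 1) + \<gamma>) * 2
         + of_real (lam * \<gamma>) * 1 * 2 = (of_real (1 + lam + \<gamma> + 5*lam*\<gamma>) :: complex)"
    by (simp add: algebra_simps)
  have "JF \<tau> lam \<gamma> \<delta> h $ 1 = (1/\<tau>) * (rcoef \<delta> 2 * tcoeff h 2 *
        (of_real ((1 - lam) * (1 - \<gamma>)) + of_real (lam * (\<gamma> + 1) + \<gamma>) * 2
         + of_real (lam * \<gamma>) * 1 * 2))"
    using JF_nth[of \<tau> lam \<gamma> \<delta> h 1] by (simp add: numeral_2_eq_2)
  also have "\<dots> = (1/\<tau>) * of_real (1 + lam + \<gamma> + 5*lam*\<gamma>) * (of_nat \<delta> + 1) * tcoeff h 2"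
    unfolding e1 rcoef2 by (simp only: mult_ac)
  finally show "JF \<tau> lam \<gamma> \<delta> h $ 1 = (1/\<tau>) * of_real (1 + lam + \<gamma> + 5*lam*\<gamma>) * (of_nat \<delta> + 1) * tcoeff h 2" .
  have e2: "of_real ((1 - lam) * (1 - \<gamma>)) + of_real (lam * (\<gamma> + 1) + \<gamma>) * 3
         + of_real (lam * \<gamma>) * 2 * 3 = (of_real (1 + 2*(lam + \<gamma> + 5*lam*\<gamma>)) :: complex)"
    by (simp add: algebra_simps)
  have "JF \<tau> lam \<gamma> \<delta> h $ 2 = (1/\<tau>) * (rcoef \<delta> 3 * tcoeff h 3 *
        (of_real ((1 - lam) * (1 - \<gamma>)) + of_real (lam * (\<gamma> + 1) + \<gamma>) * 3
         + of_real (lam * \<gamma>) * 2 * 3))"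
  proof -
    have a: "Suc 2 = 3" by simp
    show ?thesis using JF_nth[of \<tau> lam \<gamma> \<delta> h 2] unfolding a by simp
  qed
  also have "\<dots> = (1/\<tau>) * of_real (1 + 2*(lam + \<gamma> + 5*lam*\<gamma>)) *
         ((of_nat \<delta> + 1) * (of_nat \<delta> + 2) / 2) * tcoeff h 3"
    unfolding e2 rcoef3 by (simp only: mult_ac)
  finally show "JF \<tau> lam \<gamma> \<delta> h $ 2 = (1/\<tau>) * of_real (1 + 2*(lam + \<gamma> + 5*lam*\<gamma>)) *
         ((of_nat \<delta> + 1) * (of_nat \<delta> + 2) / 2) * tcoeff h 3" .
qed

lemma J_holo:
  assumes hol: "h holomorphic_on ball 0 1"
  shows "Jfun \<tau> lam \<gamma> \<delta> h holomorphic_on ball 0 1"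
proof -
  have sub: "ball 0 1 \<subseteq> eball 0 (fps_conv_radius (RT \<delta> h))"
    "ball 0 1 \<subseteq> eball 0 (fps_conv_radius (QT \<delta> h))"
    using radius_QT[OF hol, of \<delta>] by (auto intro!: ball_eball_mono simp: one_ereal_def)
  have h1: "eval_fps (RT \<delta> h) holomorphic_on ball 0 1"
    using sub(1) by (rule holomorphic_on_eval_fps)
  have h2: "eval_fps (QT \<delta> h) holomorphic_on ball 0 1"
    using sub(2) by (rule holomorphic_on_eval_fps)
  have h3: "deriv (eval_fps (RT \<delta> h)) holomorphic_on ball 0 1"
    using h1 by (rule holomorphic_deriv) simp
  have h4: "deriv (deriv (eval_fps (RT \<delta> h))) holomorphic_on ball 0 1"
    using h3 by (rule holomorphic_deriv) simp
  show ?thesis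
    unfolding Jfun_def rusch_eval rusch_quot_eval
    using assms by (intro holomorphic_intros h2 h3 h4) auto
qed

lemma le_lim_aux:
  fixes x c :: real
  assumes "\<And>r. 0 < r \<Longrightarrow> r < 1 \<Longrightarrow> x \<le> c / r ^ n"
  shows "x \<le> c"
proof -
  have lim: "((\<lambda>r. c / r ^ n) \<longlongrightarrow> c / 1 ^ n) (at_left (1::real))"
    by (intro tendsto_intros) auto
  have ev: "eventually (\<lambda>r. x \<le> c / r ^ n) (at_left (1::real))"
    using eventually_at_left_real[OF zero_less_one] by eventually_elim (use assms in auto)
  show ?thesis using tendsto_lowerbound[OF lim ev] by simp
qed

lemma carath_aux:
  assumes hol: "q holomorphic_on ball 0 1"
    and re: "\<And>z. z \<in> ball 0 1 \<Longrightarrow> Re (q z) > 0" and q0: "q 0 = 1"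
  shows "cmod (tcoeff q 1) \<le> 2" "tcoeff q 1 = 0 \<Longrightarrow> cmod (tcoeff q 2) \<le> 2"
proof -
  define w where "w = (\<lambda>z. (q z - 1) / (q z + 1))"
  have nz: "q z + 1 \<noteq> 0" if "z \<in> ball 0 1" for z
  proof
    assume "q z + 1 = 0"
    then have "Re (q z) = -1" by (metis add.commute add_eq_0_iff minus_complex.simps(1) one_complex.simps(1) zero_complex.simps(1) diff_0 diff_minus_eq_add)
    with re[OF that] show False by simp
  qed
  have wh: "w holomorphic_on ball 0 1"
    unfolding w_def using nz by (intro holomorphic_intros hol) auto
  have wlt: "cmod (w z) < 1" if z: "z \<in> ball 0 1" for z
  proof -
    have a: "(cmod (q z - 1))\<^sup>2 = (Re (q z) - 1)\<^sup>2 + (Im (q z))\<^sup>2" by (simp add: cmod_power2)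
    have b: "(cmod (q z + 1))\<^sup>2 = (Re (q z) + 1)\<^sup>2 + (Im (q z))\<^sup>2" by (simp add: cmod_power2)
    have "(cmod (q z - 1))\<^sup>2 < (cmod (q z + 1))\<^sup>2"
      unfolding a b using re[OF z] by (simp add: power2_eq_square algebra_simps)
    then have "cmod (q z - 1) < cmod (q z + 1)"
      by (rule power2_less_imp_less) simp
    then show ?thesis using nz[OF z] by (simp add: w_def norm_divide divide_less_eq)
  qed
  have bound: "cmod ((deriv ^^ n) w 0) \<le> fact n" if n: "0 < n" for n
  proof (rule le_lim_aux[of _ _ n])
    fix r :: real assume r: "0 < r" "r < 1"
    have sub: "cball 0 r \<subseteq> ball (0::complex) 1" using r by auto
    have "cmod ((deriv ^^ n) w 0) \<le> fact n * 1 / r ^ n"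
    proof (rule Cauchy_higher_deriv_bound)
      show "w holomorphic_on ball 0 r" using wh holomorphic_on_subset sub ball_subset_cball by blast
      show "continuous_on (cball 0 r) w" using holomorphic_on_imp_continuous_on[OF wh] continuous_on_subset sub by blast
      fix u :: complex assume "u \<in> ball 0 r"
      then have "u \<in> ball 0 1" using r by auto
      then show "w u \<in> ball 0 1" using wlt[of u] by (auto simp: dist_norm)
    qed (use r n in auto)
    then show "cmod ((deriv ^^ n) w 0) \<le> fact n / r ^ n" by simp
  qed
  define Q where "Q = fps_expansion q 0"
  define W where "W = fps_expansion w 0"
  have hq: "q has_fps_expansion Q" unfolding Q_def using hol by (intro has_fps_expansion_fps_expansion) auto
  have hw: "w has_fps_expansion W" unfolding W_def using wh by (intro has_fps_expansion_fps_expansion) auto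
  have h1: "(\<lambda>z. w z * (q z + 1)) has_fps_expansion W * (Q + 1)"
    by (intro has_fps_expansion_mult has_fps_expansion_add hw hq has_fps_expansion_1)
  have ev: "eventually (\<lambda>z. w z * (q z + 1) = q z - 1) (nhds 0)"
  proof -
    have "eventually (\<lambda>z. z \<in> ball (0::complex) 1) (nhds 0)"
      by (intro eventually_nhds_in_open) auto
    then show ?thesis by eventually_elim (use nz in \<open>auto simp: w_def\<close>)
  qed
  have h2: "(\<lambda>z. q z - 1) has_fps_expansion W * (Q + 1)"
    using has_fps_expansion_cong[OF ev refl] h1 by simp
  have h3: "(\<lambda>z. q z - 1) has_fps_expansion Q - 1"
    by (intro has_fps_expansion_diff hq has_fps_expansion_1)
  have eq: "W * (Q + 1) = Q - 1"
    by (rule fps_ext) (simp only: fps_nth_fps_expansion[OF h2] fps_nth_fps_expansion[OF h3])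
  have Q0: "Q $ 0 = 1" by (simp add: Q_def fps_expansion_def q0)
  have c0: "W $ 0 = 0"
    using arg_cong[OF eq, of "\<lambda>F. fps_nth F 0"] Q0 by simp
  have c1: "W $ 1 * 2 = Q $ 1"
    using arg_cong[OF eq, of "\<lambda>F. fps_nth F 1"] Q0 c0 by (simp add: fps_mult_nth)
  have c2: "W $ 1 * Q $ 1 + W $ 2 * 2 = Q $ 2"
    using arg_cong[OF eq, of "\<lambda>F. fps_nth F 2"] Q0 c0 by (simp add: fps_mult_nth numeral_2_eq_2)
  have Wb: "cmod (W $ n) \<le> 1" if "0 < n" for n
    using bound[OF that] by (simp add: W_def fps_expansion_def norm_divide)
  show "cmod (tcoeff q 1) \<le> 2"
  proof -
    have "cmod (W $ 1 * 2) \<le> 2" using Wb[of 1] by (simp add: norm_mult)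
    then show ?thesis unfolding c1 by (simp add: tcoeff_fps Q_def)
  qed
  show "cmod (tcoeff q 2) \<le> 2" if "tcoeff q 1 = 0"
  proof -
    have "Q $ 1 = 0" using that by (simp add: tcoeff_fps Q_def)
    then have "W $ 2 * 2 = Q $ 2" using c2 by simp
    moreover have "cmod (W $ 2 * 2) \<le> 2" using Wb[of 2] by (simp add: norm_mult)
    ultimately show ?thesis by (simp add: tcoeff_fps Q_def)
  qed
qed

lemma tcoeff_expansion:
  assumes "f has_fps_expansion F"
  shows "tcoeff f n = F $ n"
  using fps_nth_fps_expansion[OF assms, of n] by (simp add: tcoeff_def)

lemma carath:
  assumes hol: "p holomorphic_on ball 0 1"
    and re: "\<And>z. z \<in> ball 0 1 \<Longrightarrow> Re (p z) > \<beta>" and b1: "\<beta> < 1" and p0: "p 0 = 1"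
  shows "cmod (tcoeff p 1) \<le> 2 * (1 - \<beta>)" "cmod (tcoeff p 2) \<le> 2 * (1 - \<beta>)"
proof -
  define c where "c = complex_of_real (1 / (1 - \<beta>))"
  define p1 where "p1 = (\<lambda>z. c * (p z - of_real \<beta>))"
  have p1h: "p1 holomorphic_on ball 0 1" unfolding p1_def by (intro holomorphic_intros hol)
  have p1re: "Re (p1 z) > 0" if "z \<in> ball 0 1" for z
  proof -
    have "Re (p1 z) = (Re (p z) - \<beta>) / (1 - \<beta>)" by (simp add: p1_def c_def)
    then show ?thesis using re[OF that] b1 by simp
  qed
  have p10: "p1 0 = 1" using b1 by (simp add: p1_def c_def p0 field_simps)
  have hp: "p has_fps_expansion fps_expansion p 0" using hol by (intro has_fps_expansion_fps_expansion) auto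
  have hp1: "p1 has_fps_expansion fps_const c * (fps_expansion p 0 - fps_const (of_real \<beta>))"
    unfolding p1_def by (intro has_fps_expansion_cmult_left has_fps_expansion_diff hp has_fps_expansion_const)
  have tp1: "tcoeff p1 n = c * tcoeff p n" if "n > 0" for n
    using tcoeff_expansion[OF hp1, of n] that by (simp add: tcoeff_fps)
  have "cmod c = 1 / (1 - \<beta>)" unfolding c_def norm_of_real using b1 by simp
  then have cn: "cmod c * (1 - \<beta>) = 1" using b1 by simp
  have fin: "cmod (tcoeff p n) \<le> 2 * (1 - \<beta>)" if "n > 0" "cmod (tcoeff p1 n) \<le> 2" for n
  proof -
    have "cmod (tcoeff p n) = cmod (tcoeff p1 n) * (1 - \<beta>)"
      using tp1[OF that(1)] cn by (simp add: norm_mult)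
    then show ?thesis using mult_right_mono[OF that(2), of "1 - \<beta>"] b1 by simp
  qed
  have a1: "cmod (tcoeff p1 1) \<le> 2" by (rule carath_aux(1)[OF p1h p1re p10])
  then show "cmod (tcoeff p 1) \<le> 2 * (1 - \<beta>)" using fin[of 1] by simp
  define pm where "pm = (\<lambda>z. p1 ((-1) * z))"
  have pmh: "pm holomorphic_on ball 0 1"
  proof -
    have "(\<lambda>z. (-1) * z) holomorphic_on ball (0::complex) 1" by (intro holomorphic_intros)
    moreover have "p1 holomorphic_on (\<lambda>z. (-1) * z) ` ball 0 1"
      using p1h by (rule holomorphic_on_subset) auto
    ultimately show ?thesis unfolding pm_def using holomorphic_on_compose[unfolded o_def] by blast
  qed
  have tpm: "tcoeff pm n = (-1) ^ n * tcoeff p1 n" for n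
  proof -
    have "(deriv ^^ n) pm 0 = (-1) ^ n * (deriv ^^ n) p1 ((-1) * 0)"
      unfolding pm_def by (rule higher_deriv_compose_linear[OF p1h, of "ball 0 1"]) auto
    then show ?thesis by (simp add: tcoeff_def)
  qed
  define q where "q = (\<lambda>z. (1/2) * (p1 z + pm z))"
  have qh: "q holomorphic_on ball 0 1" unfolding q_def by (intro holomorphic_intros p1h pmh)
  have qre: "Re (q z) > 0" if "z \<in> ball 0 1" for z
  proof -
    have "(-1) * z \<in> ball 0 1" using that by simp
    then show ?thesis using p1re[OF that] p1re[of "(-1) * z"] by (simp add: q_def pm_def)
  qed
  have q0: "q 0 = 1" by (simp add: q_def pm_def p10)
  have hp1': "p1 has_fps_expansion fps_expansion p1 0" using p1h by (intro has_fps_expansion_fps_expansion) auto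
  have hpm: "pm has_fps_expansion fps_expansion pm 0" using pmh by (intro has_fps_expansion_fps_expansion) auto
  have hq: "q has_fps_expansion fps_const (1/2) * (fps_expansion p1 0 + fps_expansion pm 0)"
    unfolding q_def by (intro has_fps_expansion_cmult_left has_fps_expansion_add hp1' hpm)
  have tq: "tcoeff q n = (1/2) * (tcoeff p1 n + tcoeff pm n)" for n
    using tcoeff_expansion[OF hq, of n] by (simp add: tcoeff_fps)
  have "tcoeff q 1 = 0" using tq[of 1] tpm[of 1] by simp
  then have "cmod (tcoeff q 2) \<le> 2" using carath_aux(2)[OF qh qre q0] by blast
  moreover have "tcoeff q 2 = tcoeff p1 2" using tq[of 2] tpm[of 2] by simp
  ultimately show "cmod (tcoeff p 2) \<le> 2 * (1 - \<beta>)" using fin[of 2] by simp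
qed

lemma deriv_zero_open:
  fixes \<phi> :: "complex \<Rightarrow> complex"
  assumes "open B" "w \<in> B" "\<And>x. x \<in> B \<Longrightarrow> \<phi> x = 0" "(\<phi> has_field_derivative D) (at w)"
  shows "D = 0"
proof -
  have "((\<lambda>x. 0) has_field_derivative 0) (at w)" by simp
  then have "(\<phi> has_field_derivative 0) (at w)"
    by (rule has_field_derivative_transform_within_open[OF _ assms(1,2)]) (use assms(3) in auto)
  with assms(4) show ?thesis using DERIV_unique by blast
qed

lemma inverse_coeffs:
  assumes bu: "bi_univalent_ext f g"
  shows "g 0 = 0" "deriv g 0 = 1" "tcoeff g 2 = - tcoeff f 2"
    "tcoeff g 3 = 2 * (tcoeff f 2)\<^sup>2 - tcoeff f 3"
proof -
  have fh: "f holomorphic_on ball 0 1" and finj: "inj_on f (ball 0 1)" and f0: "f 0 = 0"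
    and fd: "deriv f 0 = 1" and gh: "g holomorphic_on ball 0 1"
    using bu by (auto simp: bi_univalent_ext_def)
  obtain r where r: "r > 0" "\<And>w. w \<in> ball 0 r \<Longrightarrow> g w \<in> ball 0 1 \<and> f (g w) = w"
    using bu by (auto simp: bi_univalent_ext_def)
  define B where "B = ball (0::complex) (min r 1)"
  have oB: "open B" and B0: "0 \<in> B" and Bsub: "B \<subseteq> ball 0 1" using r(1) by (auto simp: B_def)
  have gB: "g w \<in> ball 0 1" and fgB: "f (g w) = w" if "w \<in> B" for w
    using r(2)[of w] that by (auto simp: B_def)
  show g0: "g 0 = 0"
    using finj gB[OF B0] fgB[OF B0] f0 by (metis centre_in_ball inj_on_def zero_less_one)
  define f1 where "f1 = deriv f"
  define f2 where "f2 = deriv f1"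
  define f3 where "f3 = deriv f2"
  define g1 where "g1 = deriv g"
  define g2 where "g2 = deriv g1"
  define g3 where "g3 = deriv g2"
  have f1h: "f1 holomorphic_on ball 0 1" unfolding f1_def using fh by (rule holomorphic_deriv) simp
  have f2h: "f2 holomorphic_on ball 0 1" unfolding f2_def using f1h by (rule holomorphic_deriv) simp
  have g1h: "g1 holomorphic_on ball 0 1" unfolding g1_def using gh by (rule holomorphic_deriv) simp
  have g2h: "g2 holomorphic_on ball 0 1" unfolding g2_def using g1h by (rule holomorphic_deriv) simp
  have Df: "(f has_field_derivative f1 x) (at x)" if "x \<in> ball 0 1" for x
    unfolding f1_def using fh _ that by (rule holomorphic_derivI) simp
  have Df1: "(f1 has_field_derivative f2 x) (at x)" if "x \<in> ball 0 1" for x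
    unfolding f2_def using f1h _ that by (rule holomorphic_derivI) simp
  have Df2: "(f2 has_field_derivative f3 x) (at x)" if "x \<in> ball 0 1" for x
    unfolding f3_def using f2h _ that by (rule holomorphic_derivI) simp
  have Dg: "(g has_field_derivative g1 x) (at x)" if "x \<in> ball 0 1" for x
    unfolding g1_def using gh _ that by (rule holomorphic_derivI) simp
  have Dg1: "(g1 has_field_derivative g2 x) (at x)" if "x \<in> ball 0 1" for x
    unfolding g2_def using g1h _ that by (rule holomorphic_derivI) simp
  have Dg2: "(g2 has_field_derivative g3 x) (at x)" if "x \<in> ball 0 1" for x
    unfolding g3_def using g2h _ that by (rule holomorphic_derivI) simp
  have E1: "f1 (g w) * g1 w - 1 = 0" if w: "w \<in> B" for w
  proof (rule deriv_zero_open[OF oB w])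
    show "\<And>x. x \<in> B \<Longrightarrow> f (g x) - x = 0" using fgB by simp
    have "((\<lambda>x. f (g x)) has_field_derivative f1 (g w) * g1 w) (at w)"
      using DERIV_chain2[OF Df[OF gB[OF w]] Dg] Bsub w by auto
    then show "((\<lambda>x. f (g x) - x) has_field_derivative f1 (g w) * g1 w - 1) (at w)"
      by (intro derivative_intros)
  qed
  have E2: "f2 (g w) * g1 w * g1 w + f1 (g w) * g2 w = 0" if w: "w \<in> B" for w
  proof (rule deriv_zero_open[OF oB w])
    show "\<And>x. x \<in> B \<Longrightarrow> f1 (g x) * g1 x - 1 = 0" using E1 by simp
    have a: "((\<lambda>x. f1 (g x)) has_field_derivative f2 (g w) * g1 w) (at w)"
      using DERIV_chain2[OF Df1[OF gB[OF w]] Dg] Bsub w by auto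
    have b: "(g1 has_field_derivative g2 w) (at w)" using Dg1 Bsub w by auto
    have c: "((\<lambda>x. f1 (g x) * g1 x) has_field_derivative f2 (g w) * g1 w * g1 w + f1 (g w) * g2 w) (at w)"
      using DERIV_mult[OF a b] by (simp add: algebra_simps)
    show "((\<lambda>x. f1 (g x) * g1 x - 1) has_field_derivative f2 (g w) * g1 w * g1 w + f1 (g w) * g2 w) (at w)"
      using DERIV_diff[OF c DERIV_const[of 1]] by simp
  qed
  have E3: "f3 (g w) * g1 w * g1 w * g1 w + 3 * f2 (g w) * g1 w * g2 w + f1 (g w) * g3 w = 0"
    if w: "w \<in> B" for w
  proof (rule deriv_zero_open[OF oB w])
    show "\<And>x. x \<in> B \<Longrightarrow> f2 (g x) * g1 x * g1 x + f1 (g x) * g2 x = 0" using E2 by simp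
    have a: "((\<lambda>x. f1 (g x)) has_field_derivative f2 (g w) * g1 w) (at w)"
      using DERIV_chain2[OF Df1[OF gB[OF w]] Dg] Bsub w by auto
    have a2: "((\<lambda>x. f2 (g x)) has_field_derivative f3 (g w) * g1 w) (at w)"
      using DERIV_chain2[OF Df2[OF gB[OF w]] Dg] Bsub w by auto
    have b: "(g1 has_field_derivative g2 w) (at w)" using Dg1 Bsub w by auto
    have b2: "(g2 has_field_derivative g3 w) (at w)" using Dg2 Bsub w by auto
    show "((\<lambda>x. f2 (g x) * g1 x * g1 x + f1 (g x) * g2 x) has_field_derivative
        f3 (g w) * g1 w * g1 w * g1 w + 3 * f2 (g w) * g1 w * g2 w + f1 (g w) * g3 w) (at w)"
      by (rule DERIV_cong[OF DERIV_add[OF DERIV_mult[OF DERIV_mult[OF a2 b] b] DERIV_mult[OF a b2]]])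
         (simp add: algebra_simps)
  qed
  have f10: "f1 0 = 1" using fd by (simp add: f1_def)
  have e1: "g1 0 = 1" using E1[OF B0] g0 f10 by simp
  have e2: "g2 0 = - f2 0" using E2[OF B0] g0 f10 e1 by (simp add: add_eq_0_iff)
  have e3: "g3 0 = 3 * (f2 0)\<^sup>2 - f3 0" using E3[OF B0] g0 f10 e1 e2
    by (simp add: algebra_simps power2_eq_square)
  show "deriv g 0 = 1" using e1 by (simp add: g1_def)
  have d2: "(deriv ^^ 2) h = deriv (deriv h)" for h :: "complex \<Rightarrow> complex"
    by (simp add: numeral_2_eq_2)
  have d3: "(deriv ^^ 3) h = deriv (deriv (deriv h))" for h :: "complex \<Rightarrow> complex"
    by (simp add: numeral_3_eq_3)
  have tf2: "tcoeff f 2 = f2 0 / 2" by (simp add: tcoeff_def d2 f2_def f1_def)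
  have tg2: "tcoeff g 2 = g2 0 / 2" by (simp add: tcoeff_def d2 g2_def g1_def)
  have tf3: "tcoeff f 3 = f3 0 / 6" by (simp add: tcoeff_def d3 f3_def f2_def f1_def fact_numeral)
  have tg3: "tcoeff g 3 = g3 0 / 6" by (simp add: tcoeff_def d3 g3_def g2_def g1_def fact_numeral)
  show "tcoeff g 2 = - tcoeff f 2" using tf2 tg2 e2 by simp
  have a: "f2 0 = 2 * tcoeff f 2" "f3 0 = 6 * tcoeff f 3" using tf2 tf3 by (simp_all add: mult.commute)
  have "g3 0 = 6 * (2 * (tcoeff f 2)\<^sup>2 - tcoeff f 3)" unfolding e3 a by (simp add: algebra_simps power2_eq_square)
  then show "tcoeff g 3 = 2 * (tcoeff f 2)\<^sup>2 - tcoeff f 3" unfolding tg3 by simp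
qed

lemma key_bounds:
  assumes hol: "h holomorphic_on ball 0 1" and d1: "deriv h 0 = 1"
    and re: "\<And>z. z \<in> ball 0 1 \<Longrightarrow> Re (Jfun \<tau> lam \<gamma> \<delta> h z) > \<beta>" and b1: "\<beta> < 1"
  shows "cmod ((1/\<tau>) * of_real (1 + lam + \<gamma> + 5*lam*\<gamma>) * (of_nat \<delta> + 1) * tcoeff h 2) \<le> 2 * (1 - \<beta>)"
    "cmod ((1/\<tau>) * of_real (1 + 2*(lam + \<gamma> + 5*lam*\<gamma>)) *
         ((of_nat \<delta> + 1) * (of_nat \<delta> + 2) / 2) * tcoeff h 3) \<le> 2 * (1 - \<beta>)"
proof -
  have E: "Jfun \<tau> lam \<gamma> \<delta> h has_fps_expansion JF \<tau> lam \<gamma> \<delta> h" by (rule J_expansion[OF hol])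
  have H: "Jfun \<tau> lam \<gamma> \<delta> h holomorphic_on ball 0 1" by (rule J_holo[OF hol])
  have "Jfun \<tau> lam \<gamma> \<delta> h 0 = tcoeff (Jfun \<tau> lam \<gamma> \<delta> h) 0" by (simp add: tcoeff_def)
  also have "\<dots> = 1" using tcoeff_expansion[OF E, of 0] J_coeffs(1)[OF d1] by simp
  finally have J0: "Jfun \<tau> lam \<gamma> \<delta> h 0 = 1" .
  note C = carath[OF H re b1 J0]
  show "cmod ((1/\<tau>) * of_real (1 + lam + \<gamma> + 5*lam*\<gamma>) * (of_nat \<delta> + 1) * tcoeff h 2) \<le> 2 * (1 - \<beta>)"
    using C(1) tcoeff_expansion[OF E, of 1] J_coeffs(2)[OF d1] by simp
  show "cmod ((1/\<tau>) * of_real (1 + 2*(lam + \<gamma> + 5*lam*\<gamma>)) *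
         ((of_nat \<delta> + 1) * (of_nat \<delta> + 2) / 2) * tcoeff h 3) \<le> 2 * (1 - \<beta>)"
    using C(2) tcoeff_expansion[OF E, of 2] J_coeffs(3)[OF d1] by simp
qed

lemma norm_nat1: "cmod (of_nat \<delta> + 1 :: complex) = real \<delta> + 1"
proof -
  have "(of_nat \<delta> + 1 :: complex) = of_nat (\<delta> + 1)" by simp
  then show ?thesis by (simp only: norm_of_nat)
qed

lemma norm_nat2: "cmod (of_nat \<delta> + 2 :: complex) = real \<delta> + 2"
proof -
  have "(of_nat \<delta> + 2 :: complex) = of_nat (\<delta> + 2)" by simp
  then show ?thesis by (simp only: norm_of_nat)
qed

lemma norm_helper2:
  "cmod ((1/\<tau>) * of_real A * (of_nat \<delta> + 1) * x) = \<bar>A\<bar> * (real \<delta> + 1) * cmod x / cmod \<tau>"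
proof -
  have "(1/\<tau>) * of_real A * (of_nat \<delta> + 1) * x = of_real (A * (real \<delta> + 1)) * x / \<tau>" by simp
  then show ?thesis by (simp add: norm_mult norm_divide abs_mult norm_nat1 norm_nat2)
qed

lemma norm_helper3:
  "cmod ((1/\<tau>) * of_real A * ((of_nat \<delta> + 1) * (of_nat \<delta> + 2) / 2) * x) =
     \<bar>A\<bar> * ((real \<delta> + 1) * (real \<delta> + 2) / 2) * cmod x / cmod \<tau>"
proof -
  have "(1/\<tau>) * of_real A * ((of_nat \<delta> + 1) * (of_nat \<delta> + 2) / 2) * x =
     of_real (A * ((real \<delta> + 1) * (real \<delta> + 2) / 2)) * x / \<tau>" by simp
  then show ?thesis by (simp add: norm_mult norm_divide abs_mult norm_nat1 norm_nat2)
qed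

theorem corollary6:
  fixes \<tau> :: complex and lam \<gamma> \<beta> :: real and \<delta> :: nat and f :: "complex \<Rightarrow> complex"
  assumes "lam \<ge> 0" and "0 \<le> \<gamma>" and "\<gamma> \<le> 1" and "0 \<le> \<beta>" and "\<beta> < 1" and "\<tau> \<noteq> 0"
    and "f \<in> Theta_Sigma \<tau> lam \<gamma> \<delta> \<beta>"
  shows "cmod (tcoeff f 2) \<le> min
            (2 * cmod \<tau> * (1 - \<beta>) / ((real \<delta> + 1) * (1 + lam + \<gamma> + 5 * lam * \<gamma>)))
            (2 * sqrt (cmod \<tau> * (1 - \<beta>) /
               ((real \<delta> + 1) * (real \<delta> + 2) * (1 + 2 * (lam + \<gamma> + 5 * lam * \<gamma>))))) \<and>
         cmod (tcoeff f 3) \<le> 4 * cmod \<tau> * (1 - \<beta>) /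
               ((real \<delta> + 1) * (real \<delta> + 2) * (1 + 2 * (lam + \<gamma> + 5 * lam * \<gamma>)))"
proof -
  obtain g where bu: "bi_univalent_ext f g"
    and ref: "\<And>z. z \<in> ball 0 1 \<Longrightarrow> Re (Jfun \<tau> lam \<gamma> \<delta> f z) > \<beta>"
    and reg: "\<And>w. w \<in> ball 0 1 \<Longrightarrow> Re (Jfun \<tau> lam \<gamma> \<delta> g w) > \<beta>"
    using assms(7) unfolding Theta_Sigma_def by blast
  have fh: "f holomorphic_on ball 0 1" and fd: "deriv f 0 = 1" and gh: "g holomorphic_on ball 0 1"
    using bu by (auto simp: bi_univalent_ext_def)
  note inv = inverse_coeffs[OF bu]
  note Kf = key_bounds[OF fh fd ref assms(5)]
  note Kg = key_bounds[OF gh inv(2) reg assms(5)]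
  define t where "t = cmod \<tau>"
  define b where "b = 1 - \<beta>"
  define A2 where "A2 = 1 + lam + \<gamma> + 5 * lam * \<gamma>"
  define A3 where "A3 = 1 + 2 * (lam + \<gamma> + 5 * lam * \<gamma>)"
  define D1 where "D1 = real \<delta> + 1"
  define D2 where "D2 = real \<delta> + 2"
  define u where "u = cmod (tcoeff f 2)"
  define v where "v = cmod (tcoeff f 3)"
  define w where "w = cmod (2 * (tcoeff f 2)\<^sup>2 - tcoeff f 3)"
  have tp: "t > 0" using assms(6) by (simp add: t_def)
  have bp: "b > 0" using assms(5) by (simp add: b_def)
  have A2p: "A2 \<ge> 1" using assms(1,2) by (simp add: A2_def)
  have A3p: "A3 \<ge> 1" using assms(1,2) by (simp add: A3_def)
  have D1p: "D1 \<ge> 1" and D2p: "D2 \<ge> 2" by (simp_all add: D1_def D2_def)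
  have h1: "A2 * D1 * u / t \<le> 2 * b"
    using Kf(1) A2p unfolding norm_helper2 by (simp add: A2_def D1_def u_def t_def b_def)
  have h2: "A3 * (D1 * D2 / 2) * v / t \<le> 2 * b"
    using Kf(2) A3p unfolding norm_helper3 by (simp add: A3_def D1_def D2_def v_def t_def b_def)
  have h3: "A3 * (D1 * D2 / 2) * w / t \<le> 2 * b"
    using Kg(2) A3p unfolding norm_helper3 inv(4) by (simp add: A3_def D1_def D2_def w_def t_def b_def)
  have tri: "2 * u\<^sup>2 \<le> v + w"
  proof -
    have "cmod (2 * (tcoeff f 2)\<^sup>2) \<le> cmod (tcoeff f 3) + cmod (2 * (tcoeff f 2)\<^sup>2 - tcoeff f 3)"
      using norm_triangle_ineq[of "tcoeff f 3" "2 * (tcoeff f 2)\<^sup>2 - tcoeff f 3"] by simp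
    then show ?thesis by (simp add: u_def v_def w_def norm_mult norm_power)
  qed
  have pos: "A2 * D1 > 0" "A3 * D1 * D2 > 0" using A2p A3p D1p D2p by auto
  have g1: "u \<le> 2 * t * b / (D1 * A2)"
  proof -
    have "A2 * D1 * u \<le> 2 * b * t" using h1 tp by (simp add: divide_le_eq)
    then show ?thesis using pos by (simp add: le_divide_eq mult.commute mult.left_commute)
  qed
  have g3: "v \<le> 4 * t * b / (D1 * D2 * A3)"
  proof -
    have "A3 * (D1 * D2 / 2) * v \<le> 2 * b * t" using h2 tp by (simp add: divide_le_eq)
    then show ?thesis using pos by (simp add: le_divide_eq field_simps)
  qed
  have g3w: "w \<le> 4 * t * b / (D1 * D2 * A3)"
  proof -
    have "A3 * (D1 * D2 / 2) * w \<le> 2 * b * t" using h3 tp by (simp add: divide_le_eq)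
    then show ?thesis using pos by (simp add: le_divide_eq field_simps)
  qed
  define K where "K = t * b / (D1 * D2 * A3)"
  have "4 * K = 4 * t * b / (D1 * D2 * A3)" by (simp add: K_def)
  then have "u\<^sup>2 \<le> 4 * K" using tri g3 g3w by linarith
  then have "sqrt (u\<^sup>2) \<le> sqrt (4 * K)" by (rule real_sqrt_le_mono)
  then have g2: "u \<le> 2 * sqrt K" by (simp add: u_def real_sqrt_mult)
  show ?thesis
    using g1 g2 g3 unfolding t_def b_def A2_def A3_def D1_def D2_def u_def v_def K_def
    by (simp add: mult.commute mult.left_commute)
qed

end
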